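(* Let $q$ be a power of an odd prime $p$ and let $\chi$ be a non-trivial multiplicative character of $\mathbb{F}_q$. Then for any subsets $A,B \subseteq \mathbb{F}_q$, $$\bigg|\sum_{a\in A,\, b\in B}\chi(a+b)\bigg| \leq \sqrt{q|A||B|}\Big(1-\frac{|A|}{q}\Big)^{1/2}\Big(1-\frac{|B|}{q}\Big)^{1/2}.$$
   Context: Multiplicative characters of $\mathbb{F}_q$ are homomorphisms $\mathbb{F}_q^*\to\mathbb{C}^*$, extended by $\chi(0)=0$. *)

theory Defs
  imports "HOL-Analysis.Analysis"
begin

definition mult_char :: "('a::{field,finite} \<Rightarrow> complex) \<Rightarrow> bool" where
  "mult_char chr \<longleftrightarrow> chr 0 = 0
     \<and> (\<forall>x. x \<noteq> 0 \<longrightarrow> chr x \<noteq> 0)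
     \<and> (\<forall>x y. x \<noteq> 0 \<longrightarrow> y \<noteq> 0 \<longrightarrow> chr (x * y) = chr x * chr y)"

definition nontrivial_char :: "('a::{field,finite} \<Rightarrow> complex) \<Rightarrow> bool" where
  "nontrivial_char chr \<longleftrightarrow> (\<exists>x. x \<noteq> 0 \<and> chr x \<noteq> 1)"

end

theory Submission
  imports Defs
begin

lemma mc_mult:
  assumes "mult_char c" shows "c (x * y) = c x * c y"
  using assms unfolding mult_char_def by (cases "x = 0 \<or> y = 0") auto

lemma mc_one:
  assumes "mult_char c" shows "c 1 = 1"
proof -
  have "c 1 = c 1 * c 1" using mc_mult[OF assms, of 1 1] by simp
  moreover have "c 1 \<noteq> 0" using assms unfolding mult_char_def by auto
  ultimately show ?thesis by (metis mult_cancel_left1)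
qed

lemma mc_pow:
  assumes "mult_char c" shows "c (x ^ n) = c x ^ n"
  by (induction n) (simp_all add: mc_one[OF assms] mc_mult[OF assms])

lemma finite_field_root_of_unity:
  fixes x :: "'a::{field,finite}"
  assumes "x \<noteq> 0" shows "\<exists>n>0. x ^ n = 1"
proof -
  have "\<not> inj (\<lambda>n::nat. x ^ n)"
  proof
    assume "inj (\<lambda>n::nat. x ^ n)"
    hence "infinite (range (\<lambda>n::nat. x ^ n))"
      using finite_imageD infinite_UNIV_nat by blast
    thus False by simp
  qed
  then obtain m n :: nat where mn: "m \<noteq> n" "x ^ m = x ^ n" unfolding inj_def by blast
  show ?thesis
  proof (cases "m < n")
    case True
    have "x ^ m * x ^ (n - m) = x ^ m * 1" using mn True
      by (metis le_add_diff_inverse less_imp_le_nat mult.right_neutral power_add)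
    hence "x ^ (n - m) = 1" using assms by simp
    thus ?thesis using True by (intro exI[of _ "n - m"]) auto
  next
    case False
    hence "n < m" using mn by auto
    have "x ^ n * x ^ (m - n) = x ^ n * 1" using mn \<open>n < m\<close>
      by (metis le_add_diff_inverse less_imp_le_nat mult.right_neutral power_add)
    hence "x ^ (m - n) = 1" using assms by simp
    thus ?thesis using \<open>n < m\<close> by (intro exI[of _ "m - n"]) auto
  qed
qed

lemma mc_norm:
  assumes "mult_char c" "x \<noteq> 0" shows "norm (c x) = 1"
proof -
  obtain n where n: "n > 0" "x ^ n = 1" using finite_field_root_of_unity[OF assms(2)] by blast
  hence "c x ^ n = 1" using mc_pow[OF assms(1)] mc_one[OF assms(1)] by metis
  hence "norm (c x) ^ n = 1" by (metis norm_one norm_power)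
  thus ?thesis using n(1) power_eq_iff_eq_base[of n "norm (c x)" 1] by simp
qed

lemma mc_cnj:
  assumes "mult_char c" shows "cnj (c x) = c (inverse x)"
proof (cases "x = 0")
  case True thus ?thesis using assms unfolding mult_char_def by simp
next
  case False
  have "c x * c (inverse x) = 1" using mc_mult[OF assms, of x "inverse x"] False mc_one[OF assms] by simp
  moreover have "c x * cnj (c x) = 1" using mc_norm[OF assms False]
    by (metis complex_norm_square of_real_1 power_one)
  moreover have "c x \<noteq> 0" using assms False unfolding mult_char_def by auto
  ultimately show ?thesis by (metis mult_left_cancel)
qed

lemma mc_sum0:
  assumes "mult_char c" "nontrivial_char c" shows "(\<Sum>x\<in>UNIV. c x) = 0"
proof -
  obtain g where g: "g \<noteq> 0" "c g \<noteq> 1" using assms(2) unfolding nontrivial_char_def by blast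
  have "(\<Sum>x\<in>UNIV. c x) = (\<Sum>x\<in>UNIV. c (g * x))"
    by (rule sum.reindex_bij_betw[symmetric], rule bij_betwI[where g="\<lambda>y. inverse g * y"]) (auto simp: g)
  also have "\<dots> = c g * (\<Sum>x\<in>UNIV. c x)" by (simp add: mc_mult[OF assms(1)] sum_distrib_left)
  finally show ?thesis using g(2) by (metis mult_cancel_right1 mult.commute)
qed

lemma sum_shift:
  fixes f :: "'a::{field,finite} \<Rightarrow> 'b::comm_monoid_add"
  shows "(\<Sum>x\<in>UNIV. f (x + b)) = (\<Sum>x\<in>UNIV. f x)"
  by (rule sum.reindex_bij_betw, rule bij_betwI[where g="\<lambda>y. y - b"]) auto

lemma mc_corr:
  assumes "mult_char c" "nontrivial_char c" "d \<noteq> 0"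
  shows "(\<Sum>x\<in>UNIV. cnj (c x) * c (x + d)) = -1"
proof -
  have t: "cnj (c x) * c (x + d) = c (1 + d * inverse x) - (if x = 0 then 1 else 0)" for x
  proof (cases "x = 0")
    case True thus ?thesis using assms(1) mc_one[OF assms(1)] unfolding mult_char_def by simp
  next
    case False
    have "cnj (c x) * c (x + d) = c ((x + d) * inverse x)"
      by (simp add: mc_cnj[OF assms(1)] mc_mult[OF assms(1)] mult.commute)
    also have "(x + d) * inverse x = 1 + d * inverse x" using False by (simp add: field_simps)
    finally show ?thesis using False by simp
  qed
  have "(\<Sum>x\<in>UNIV. c (1 + d * inverse x)) = (\<Sum>x\<in>UNIV. c x)"
  proof (rule sum.reindex_bij_betw)
    show "bij_betw (\<lambda>x. 1 + d * inverse x) UNIV UNIV"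
      using assms(3)
      by (intro bij_betwI[where g="\<lambda>y. inverse (inverse d * (y - 1))"]) (auto simp: mult.assoc[symmetric])
  qed
  hence "(\<Sum>x\<in>UNIV. c (1 + d * inverse x)) = 0" using mc_sum0[OF assms(1,2)] by simp
  thus ?thesis by (simp add: t sum_subtractf)
qed

lemma mc_sq:
  fixes c :: "'a::{field,finite} \<Rightarrow> complex"
  assumes "mult_char c"
  shows "(\<Sum>x\<in>UNIV. cnj (c x) * c x) = of_nat CARD('a) - 1"
proof -
  have pt: "cnj (c x) * c x = 1 - (if x = 0 then 1 else 0)" for x :: 'a
    proof (cases "x = 0")
      case True thus ?thesis using assms unfolding mult_char_def by simp
    next
      case False thus ?thesis using mc_norm[OF assms False]
        by (metis complex_norm_square diff_zero mult.commute of_real_1 power_one)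
    qed
  show ?thesis by (simp add: pt sum_subtractf)
qed

lemma sum_ind: "(\<Sum>x\<in>UNIV. (if x \<in> A then 1 else 0) :: real) = real (card (A :: 'a::finite set))"
  by (simp add: sum.If_cases)

lemma kernel:
  fixes c :: "'a::{field,finite} \<Rightarrow> complex"
  assumes "mult_char c" "nontrivial_char c"
  shows "(\<Sum>a\<in>UNIV. c (a + b) * cnj (c (a + b'))) = (if b = b' then of_nat CARD('a) else 0) - 1"
proof -
  have "(\<Sum>a\<in>UNIV. c (a + b) * cnj (c (a + b'))) = (\<Sum>a\<in>UNIV. cnj (c (a + b')) * c ((a + b') + (b - b')))"
    by (simp add: mult.commute algebra_simps)
  also have "\<dots> = (\<Sum>x\<in>UNIV. cnj (c x) * c (x + (b - b')))"
    by (rule sum_shift[where f="\<lambda>x. cnj (c x) * c (x + (b - b'))"])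
  also have "\<dots> = (if b = b' then of_nat CARD('a) else 0) - 1"
    using mc_sq[OF assms(1)] mc_corr[OF assms, of "b - b'"] by auto
  finally show ?thesis .
qed

theorem theorem1p14:
  fixes chr :: "'a::{field,finite} \<Rightarrow> complex"
    and p k :: nat
    and A B :: "'a set"
  assumes "prime p" and "odd p" and "CARD('a) = p ^ k"
    and "mult_char chr" and "nontrivial_char chr"
  shows "norm (\<Sum>a\<in>A. \<Sum>b\<in>B. chr (a + b))
    \<le> sqrt (real CARD('a) * real (card A) * real (card B))
       * sqrt (1 - real (card A) / real CARD('a))
       * sqrt (1 - real (card B) / real CARD('a))"
proof -
  note mc = assms(4) and nt = assms(5)
  define q where "q = real CARD('a)"
  have q0: "q > 0" unfolding q_def by simp
  have qc: "complex_of_real q = of_nat CARD('a)" unfolding q_def by simp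
  define \<alpha> where "\<alpha> = real (card A) / q"
  define \<beta> where "\<beta> = real (card B) / q"
  define U where "U = (\<lambda>a. if a \<in> A then 1 else (0::real))"
  define V where "V = (\<lambda>a. if a \<in> B then 1 else (0::real))"
  define u where "u = (\<lambda>a. U a - \<alpha>)"
  define v where "v = (\<lambda>a. V a - \<beta>)"
  define w where "w = (\<lambda>a. \<Sum>b\<in>UNIV. complex_of_real (v b) * chr (a + b))"
  have Z1: "(\<Sum>b\<in>UNIV. chr (a + b)) = 0" for a
    using sum_shift[of chr a] mc_sum0[OF mc nt] by (simp add: add.commute)
  have Z2: "(\<Sum>a\<in>UNIV. chr (a + b)) = 0" for b
    using sum_shift[of chr b] mc_sum0[OF mc nt] by simp
  have UU: "U a * U a = U a" for a by (simp add: U_def)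
  have VV: "V a * V a = V a" for a by (simp add: V_def)
  have sU: "sum U UNIV = real (card A)" unfolding U_def by (rule sum_ind)
  have sV: "sum V UNIV = real (card B)" unfolding V_def by (rule sum_ind)
  have S1: "(\<Sum>a\<in>A. \<Sum>b\<in>B. chr (a + b)) = (\<Sum>a\<in>UNIV. complex_of_real (U a) * (\<Sum>b\<in>UNIV. complex_of_real (V b) * chr (a + b)))"
  proof -
    have r: "(\<Sum>x\<in>UNIV. complex_of_real (if x \<in> C then 1 else 0) * f x) = sum f C" for C :: "'a set" and f
    proof -
      have "(\<Sum>x\<in>UNIV. complex_of_real (if x \<in> C then 1 else 0) * f x) = (\<Sum>x\<in>UNIV. if x \<in> C then f x else 0)"
        by (rule sum.cong) auto
      also have "\<dots> = sum f (UNIV \<inter> C)" by (rule sum.inter_restrict[symmetric]) simp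
      finally show ?thesis by simp
    qed
    show ?thesis unfolding U_def V_def r ..
  qed
  have wV: "w a = (\<Sum>b\<in>UNIV. complex_of_real (V b) * chr (a + b))" for a
  proof -
    have "w a = (\<Sum>b\<in>UNIV. complex_of_real (V b) * chr (a + b)) - of_real \<beta> * (\<Sum>b\<in>UNIV. chr (a + b))"
      unfolding w_def v_def by (simp add: algebra_simps sum_subtractf sum_distrib_left)
    thus ?thesis using Z1 by simp
  qed
  have S2: "(\<Sum>a\<in>UNIV. complex_of_real (u a) * w a) = (\<Sum>a\<in>UNIV. complex_of_real (U a) * w a)"
  proof -
    have "sum w UNIV = (\<Sum>b\<in>UNIV. \<Sum>a\<in>UNIV. complex_of_real (v b) * chr (a + b))"
      unfolding w_def by (rule sum.swap)
    also have "\<dots> = (\<Sum>b\<in>UNIV. complex_of_real (v b) * (\<Sum>a\<in>UNIV. chr (a + b)))"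
      by (simp add: sum_distrib_left)
    also have "\<dots> = 0" using Z2 by simp
    finally have "(\<Sum>a\<in>UNIV. complex_of_real \<alpha> * w a) = of_real \<alpha> * 0"
      by (simp add: sum_distrib_left[symmetric])
    hence "(\<Sum>a\<in>UNIV. complex_of_real \<alpha> * w a) = 0" by simp
    thus ?thesis unfolding u_def by (simp add: algebra_simps sum_subtractf)
  qed
  have S: "(\<Sum>a\<in>A. \<Sum>b\<in>B. chr (a + b)) = (\<Sum>a\<in>UNIV. complex_of_real (u a) * w a)"
    using S1 S2 wV by simp
  have CS: "norm (\<Sum>a\<in>UNIV. complex_of_real (u a) * w a) \<le> L2_set u UNIV * L2_set (\<lambda>a. norm (w a)) UNIV"
  proof -
    have "norm (\<Sum>a\<in>UNIV. complex_of_real (u a) * w a) \<le> (\<Sum>a\<in>UNIV. \<bar>u a\<bar> * \<bar>norm (w a)\<bar>)"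
      by (rule order.trans[OF norm_sum]) (simp add: norm_mult)
    also have "\<dots> \<le> L2_set u UNIV * L2_set (\<lambda>a. norm (w a)) UNIV" by (rule L2_set_mult_ineq)
    finally show ?thesis .
  qed
  have Lu: "(\<Sum>a\<in>UNIV. (u a)^2) = real (card A) * (1 - \<alpha>)"
  proof -
    have pt: "(u a)^2 = (1 - 2 * \<alpha>) * U a + \<alpha>^2" for a
      unfolding u_def using UU[of a] by (simp add: power2_eq_square algebra_simps)
    have "(\<Sum>a\<in>UNIV. (u a)^2) = (1 - 2 * \<alpha>) * (\<Sum>a\<in>UNIV. U a) + q * \<alpha>^2"
      unfolding pt sum.distrib q_def by (simp add: sum_distrib_left)
    hence "(\<Sum>a\<in>UNIV. (u a)^2) = (\<Sum>a\<in>UNIV. U a) - 2 * \<alpha> * (\<Sum>a\<in>UNIV. U a) + q * \<alpha>^2"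
      by (simp add: algebra_simps)
    thus ?thesis using q0 unfolding sU \<alpha>_def by (simp add: field_simps power2_eq_square)
  qed
  have sv: "sum v UNIV = 0" unfolding v_def \<beta>_def using q0 by (simp add: sum_subtractf sV q_def)
  have svc: "(\<Sum>b\<in>UNIV. complex_of_real (v b)) = 0" using sv by (simp flip: of_real_sum)
  have Lv: "(\<Sum>a\<in>UNIV. (v a)^2) = real (card B) * (1 - \<beta>)"
  proof -
    have pt: "(v a)^2 = (1 - 2 * \<beta>) * V a + \<beta>^2" for a
      unfolding v_def using VV[of a] by (simp add: power2_eq_square algebra_simps)
    have "(\<Sum>a\<in>UNIV. (v a)^2) = (1 - 2 * \<beta>) * (\<Sum>a\<in>UNIV. V a) + q * \<beta>^2"
      unfolding pt sum.distrib q_def by (simp add: sum_distrib_left)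
    hence "(\<Sum>a\<in>UNIV. (v a)^2) = (\<Sum>a\<in>UNIV. V a) - 2 * \<beta> * (\<Sum>a\<in>UNIV. V a) + q * \<beta>^2"
      by (simp add: algebra_simps)
    thus ?thesis using q0 unfolding sV \<beta>_def by (simp add: field_simps power2_eq_square)
  qed
  have Lw: "(\<Sum>a\<in>UNIV. (norm (w a))^2) = q * (\<Sum>a\<in>UNIV. (v a)^2)"
  proof -
    have "complex_of_real (\<Sum>a\<in>UNIV. (norm (w a))^2) = (\<Sum>a\<in>UNIV. w a * cnj (w a))"
      unfolding of_real_sum by (rule sum.cong[OF refl]) (metis complex_norm_square of_real_power)
    also have "\<dots> = (\<Sum>a\<in>UNIV. \<Sum>b\<in>UNIV. \<Sum>b'\<in>UNIV. complex_of_real (v b) * complex_of_real (v b') * (chr (a + b') * cnj (chr (a + b))))"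
      unfolding w_def by (simp add: sum_distrib_left sum_distrib_right mult_ac)
    also have "\<dots> = (\<Sum>b\<in>UNIV. \<Sum>b'\<in>UNIV. complex_of_real (v b) * complex_of_real (v b') * (\<Sum>a\<in>UNIV. chr (a + b') * cnj (chr (a + b))))"
    proof -
      have "(\<Sum>a\<in>UNIV. \<Sum>b\<in>UNIV. \<Sum>b'\<in>UNIV. complex_of_real (v b) * complex_of_real (v b') * (chr (a + b') * cnj (chr (a + b))))
         = (\<Sum>b\<in>UNIV. \<Sum>a\<in>UNIV. \<Sum>b'\<in>UNIV. complex_of_real (v b) * complex_of_real (v b') * (chr (a + b') * cnj (chr (a + b))))"
        by (rule sum.swap)
      also have "\<dots> = (\<Sum>b\<in>UNIV. \<Sum>b'\<in>UNIV. \<Sum>a\<in>UNIV. complex_of_real (v b) * complex_of_real (v b') * (chr (a + b') * cnj (chr (a + b))))"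
        by (rule sum.cong[OF refl], rule sum.swap)
      also have "\<dots> = (\<Sum>b\<in>UNIV. \<Sum>b'\<in>UNIV. complex_of_real (v b) * complex_of_real (v b') * (\<Sum>a\<in>UNIV. chr (a + b') * cnj (chr (a + b))))"
        by (simp only: sum_distrib_left)
      finally show ?thesis .
    qed
    also have "\<dots> = (\<Sum>b\<in>UNIV. \<Sum>b'\<in>UNIV. complex_of_real (v b) * complex_of_real (v b') * ((if b' = b then of_real q else 0) - 1))"
      unfolding qc using kernel[OF mc nt] by simp
    also have "\<dots> = of_real q * (\<Sum>b\<in>UNIV. complex_of_real (v b) * complex_of_real (v b)) - (\<Sum>b\<in>UNIV. complex_of_real (v b)) * (\<Sum>b'\<in>UNIV. complex_of_real (v b'))"
    proof -
      have pt: "complex_of_real (v b) * complex_of_real (v b') * ((if b' = b then of_real q else 0) - 1)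
          = (if b' = b then of_real q * (complex_of_real (v b) * complex_of_real (v b)) else 0) - complex_of_real (v b) * complex_of_real (v b')" for b b'
        by (auto simp: algebra_simps)
      show ?thesis unfolding pt sum_subtractf sum.delta' by (simp add: sum_distrib_left sum_distrib_right mult.commute)
    qed
    also have "\<dots> = complex_of_real (q * (\<Sum>a\<in>UNIV. (v a)^2))"
      using sv by (simp add: power2_eq_square sum_distrib_left svc)
    finally show ?thesis by (simp only: of_real_eq_iff)
  qed
  have "norm (\<Sum>a\<in>A. \<Sum>b\<in>B. chr (a + b)) \<le> sqrt (real (card A) * (1 - \<alpha>)) * sqrt (q * (real (card B) * (1 - \<beta>)))"
    using CS unfolding S L2_set_def Lu Lw Lv .
  also have "\<dots> = sqrt (real CARD('a) * real (card A) * real (card B))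
       * sqrt (1 - real (card A) / real CARD('a))
       * sqrt (1 - real (card B) / real CARD('a))"
    unfolding \<alpha>_def \<beta>_def q_def by (simp add: real_sqrt_mult mult_ac)
  finally show ?thesis .
qed

end
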